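(* Let $C_n$ be the cycle on $n\ge 3$ vertices. Every ordered multiplicity list that is realized by some matrix in $\mathcal{S}(C_n)$ is realized by some matrix in $\mathcal{S}(C_n)$ that has the SMP.
   Context: For a graph $G$ on vertex set $\{1,\ldots,n\}$, $\mathcal{S}(G)$ is the set of real symmetric $n\times n$ matrices whose $(i,j)$-entry for $i\neq j$ is nonzero if and only if $\{i,j\}$ is an edge (diagonal entries arbitrary). For symmetric $A$ with distinct eigenvalues $\lambda_1<\cdots<\lambda_q$ of multiplicities $m_1,\ldots,m_q$, the ordered multiplicity list is $\mathbf{m}(A)=(m_1,\ldots,m_q)$. $\circ$ is the entrywise product and $[A,X]=AX-XA$. A symmetric matrix $A$ with $q$ distinct eigenvalues has the strong multiplicity property (SMP) if $X=O$ is the only real symmetric matrix with $A\circ X=O$, $I\circ X=O$, $[A,X]=O$ and $\operatorname{tr}(A^kX)=0$ for $k=0,\ldots,q-1$. *)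

theory Defs
  imports "Jordan_Normal_Form.Matrix" "Jordan_Normal_Form.Char_Poly"
begin

text \<open>Vertices of the cycle C_n are labelled 0,...,n-1 (instead of 1,...,n);
  i and j are adjacent iff they are consecutive modulo n.\<close>
definition cycle_edge :: "nat \<Rightarrow> nat \<Rightarrow> nat \<Rightarrow> bool" where
  "cycle_edge n i j \<longleftrightarrow> i < n \<and> j < n \<and> i \<noteq> j \<and> (j = (i + 1) mod n \<or> i = (j + 1) mod n)"

definition S_graph :: "nat \<Rightarrow> (nat \<Rightarrow> nat \<Rightarrow> bool) \<Rightarrow> real mat set" where
  "S_graph n E = {A. A \<in> carrier_mat n n \<and> transpose_mat A = A \<and>
     (\<forall>i<n. \<forall>j<n. i \<noteq> j \<longrightarrow> (A $$ (i,j) \<noteq> 0 \<longleftrightarrow> E i j))}"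

definition distinct_eigenvalues :: "real mat \<Rightarrow> real list" where
  "distinct_eigenvalues A = sorted_list_of_set {x. poly (char_poly A) x = 0}"

definition mult_list :: "real mat \<Rightarrow> nat list" where
  "mult_list A = map (\<lambda>x. order x (char_poly A)) (distinct_eigenvalues A)"

definition SMP :: "real mat \<Rightarrow> bool" where
  "SMP A \<longleftrightarrow> (let n = dim_row A; q = length (distinct_eigenvalues A) in
     \<forall>X \<in> carrier_mat n n.
       transpose_mat X = X \<and>
       (\<forall>i<n. \<forall>j<n. A $$ (i,j) * X $$ (i,j) = 0) \<and>
       (\<forall>i<n. X $$ (i,i) = 0) \<and>
       A * X - X * A = 0\<^sub>m n n \<and>
       (\<forall>k<q. (\<Sum>i<n. (A ^\<^sub>m k * X) $$ (i,i)) = 0)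
       \<longrightarrow> X = 0\<^sub>m n n)"

end

theory Submission
  imports Defs "Jordan_Normal_Form.Schur_Decomposition"
begin


interpretation of_real_poly_hom: map_poly_inj_idom_hom "of_real :: real \<Rightarrow> complex" ..

lemma mult_entry: assumes "A \<in> carrier_mat n n" "B \<in> carrier_mat n n" "i < n" "j < n"
  shows "(A * B) $$ (i,j) = (\<Sum>l<n. A $$ (i,l) * B $$ (l,j))"
  using assms by (auto simp: scalar_prod_def lessThan_atLeast0 intro!: sum.cong)

lemma pow_commute: assumes A: "A \<in> carrier_mat n n" shows "A * A ^\<^sub>m k = A ^\<^sub>m k * A"
proof (induct k)
  case 0 thus ?case using A by simp
next
  case (Suc k)
  have "A * A ^\<^sub>m Suc k = (A * A ^\<^sub>m k) * A" using A by (simp add: assoc_mult_mat[of _ n n _ n _ n])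
  also have "\<dots> = A ^\<^sub>m Suc k * A" using Suc by simp
  finally show ?case .
qed

lemma pow_add_mat: assumes A: "A \<in> carrier_mat n n" shows "A ^\<^sub>m (j + k) = A ^\<^sub>m j * A ^\<^sub>m k"
proof (induct k)
  case 0 thus ?case using A by simp
next
  case (Suc k)
  have "A ^\<^sub>m (j + Suc k) = A ^\<^sub>m (j + k) * A" by simp
  also have "\<dots> = A ^\<^sub>m j * A ^\<^sub>m k * A" using Suc by simp
  also have "\<dots> = A ^\<^sub>m j * (A ^\<^sub>m k * A)" using A by (simp add: assoc_mult_mat[of _ n n _ n _ n])
  finally show ?case by simp
qed

lemma pow_sym: fixes A :: "real mat" assumes A: "A \<in> carrier_mat n n" and s: "transpose_mat A = A"
  shows "transpose_mat (A ^\<^sub>m k) = A ^\<^sub>m k"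
proof (induct k)
  case 0 thus ?case using A by simp
next
  case (Suc k)
  have "transpose_mat (A ^\<^sub>m Suc k) = transpose_mat A * transpose_mat (A ^\<^sub>m k)"
    using A by (simp add: transpose_mult[of "A ^\<^sub>m k" n n A n])
  also have "\<dots> = A * A ^\<^sub>m k" using Suc s by simp
  also have "\<dots> = A ^\<^sub>m Suc k" using pow_commute[OF A] by simp
  finally show ?case .
qed

lemma pow_sym_entry: fixes A :: "real mat" assumes A: "A \<in> carrier_mat n n" and s: "transpose_mat A = A"
  and "i < n" "j < n" shows "(A ^\<^sub>m k) $$ (i,j) = (A ^\<^sub>m k) $$ (j,i)"
proof -
  have "(A ^\<^sub>m k) $$ (j,i) = transpose_mat (A ^\<^sub>m k) $$ (i,j)" using assms by simp
  thus ?thesis using pow_sym[OF A s] by simp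
qed

definition evm :: "real mat \<Rightarrow> real poly \<Rightarrow> real mat" where
  "evm A p = mat (dim_row A) (dim_row A) (\<lambda>(a,b). \<Sum>j\<le>degree p. coeff p j * (A ^\<^sub>m j) $$ (a,b))"

lemma evm_carrier[simp]: "A \<in> carrier_mat n n \<Longrightarrow> evm A p \<in> carrier_mat n n"
  unfolding evm_def by auto

lemma evm_dim[simp]: "A \<in> carrier_mat n n \<Longrightarrow> dim_row (evm A p) = n"
   "A \<in> carrier_mat n n \<Longrightarrow> dim_col (evm A p) = n"
  unfolding evm_def by auto

lemma evm_bound: assumes A: "A \<in> carrier_mat n n" and "degree p \<le> D" "a < n" "b < n"
  shows "evm A p $$ (a,b) = (\<Sum>j\<le>D. coeff p j * (A ^\<^sub>m j) $$ (a,b))"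
proof -
  have "(\<Sum>j\<le>D. coeff p j * (A ^\<^sub>m j) $$ (a,b)) = (\<Sum>j\<le>degree p. coeff p j * (A ^\<^sub>m j) $$ (a,b))"
    by (rule sum.mono_neutral_right) (auto simp: coeff_eq_0 assms)
  thus ?thesis using assms unfolding evm_def by simp
qed

lemma evm_add: assumes A: "A \<in> carrier_mat n n"
  shows "evm A (p + q) = evm A p + evm A q"
proof (rule eq_matI)
  fix a b assume a: "a < dim_row (evm A p + evm A q)" and b: "b < dim_col (evm A p + evm A q)"
  let ?D = "max (degree p) (degree q)"
  have D: "degree (p+q) \<le> ?D" "degree p \<le> ?D" "degree q \<le> ?D"
    by (auto simp: degree_add_le_max)
  from a b A have ab: "a < n" "b < n" by auto
  show "evm A (p + q) $$ (a, b) = (evm A p + evm A q) $$ (a, b)"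
    using ab A by (simp add: evm_bound[OF A D(1) ab] evm_bound[OF A D(2) ab] evm_bound[OF A D(3) ab]
        sum.distrib ring_distribs)
qed (insert A, auto)

lemma evm_smult: assumes A: "A \<in> carrier_mat n n"
  shows "evm A (Polynomial.smult c p) = c \<cdot>\<^sub>m evm A p"
proof (rule eq_matI)
  fix a b assume a: "a < dim_row (c \<cdot>\<^sub>m evm A p)" and b: "b < dim_col (c \<cdot>\<^sub>m evm A p)"
  from a b A have ab: "a < n" "b < n" by auto
  have D: "degree (Polynomial.smult c p) \<le> degree p" by (rule degree_smult_le)
  show "evm A (Polynomial.smult c p) $$ (a, b) = (c \<cdot>\<^sub>m evm A p) $$ (a, b)"
    using ab A by (simp add: evm_bound[OF A D ab] evm_bound[OF A order.refl ab] sum_distrib_left mult.assoc)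
qed (insert A, auto)

lemma evm_const: assumes A: "A \<in> carrier_mat n n"
  shows "evm A [:c:] = c \<cdot>\<^sub>m 1\<^sub>m n"
  by (rule eq_matI, insert A, auto simp: evm_def)

lemma evm_pCons0: assumes A: "A \<in> carrier_mat n n"
  shows "evm A (pCons 0 p) = A * evm A p"
proof (rule eq_matI)
  fix a b assume a: "a < dim_row (A * evm A p)" and b: "b < dim_col (A * evm A p)"
  from a b A have ab: "a < n" "b < n" by auto
  have D: "degree (pCons 0 p) \<le> Suc (degree p)" by (simp add: degree_pCons_le)
  have "evm A (pCons 0 p) $$ (a,b) = (\<Sum>j\<le>Suc (degree p). coeff (pCons 0 p) j * (A ^\<^sub>m j) $$ (a,b))"
    by (rule evm_bound[OF A D ab])
  also have "\<dots> = (\<Sum>j\<le>degree p. coeff p j * (A ^\<^sub>m Suc j) $$ (a,b))"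
    by (subst sum.atMost_Suc_shift, simp)
  also have "\<dots> = (\<Sum>j\<le>degree p. coeff p j * (\<Sum>l<n. A $$ (a,l) * (A ^\<^sub>m j) $$ (l,b)))"
  proof (rule sum.cong[OF refl])
    fix j
    have "A ^\<^sub>m Suc j = A * A ^\<^sub>m j" using pow_commute[OF A, of j] by simp
    thus "coeff p j * (A ^\<^sub>m Suc j) $$ (a,b) = coeff p j * (\<Sum>l<n. A $$ (a,l) * (A ^\<^sub>m j) $$ (l,b))"
      using mult_entry[OF A _ ab, of "A ^\<^sub>m j"] A by simp
  qed
  also have "\<dots> = (\<Sum>l<n. A $$ (a,l) * (\<Sum>j\<le>degree p. coeff p j * (A ^\<^sub>m j) $$ (l,b)))"
    by (simp add: sum_distrib_left sum.swap[of _ "{..<n}"] mult.left_commute)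
  also have "\<dots> = (A * evm A p) $$ (a,b)"
    using mult_entry[OF A evm_carrier[OF A] ab] evm_bound[OF A order.refl _ ab(2)] by simp
  finally show "evm A (pCons 0 p) $$ (a, b) = (A * evm A p) $$ (a, b)" .
qed (insert A, auto)

lemma evm_zero: assumes A: "A \<in> carrier_mat n n" shows "evm A 0 = 0\<^sub>m n n"
  by (rule eq_matI, insert A, auto simp: evm_def)

lemma evm_pCons: assumes A: "A \<in> carrier_mat n n"
  shows "evm A (pCons a p) = a \<cdot>\<^sub>m 1\<^sub>m n + A * evm A p"
proof -
  have "pCons a p = [:a:] + pCons 0 p" by simp
  thus ?thesis using evm_add[OF A] evm_const[OF A] evm_pCons0[OF A] by metis
qed

lemma evm_mult: assumes A: "A \<in> carrier_mat n n"
  shows "evm A (p * q) = evm A p * evm A q"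
proof (induct p rule: pCons_induct)
  case 0 thus ?case using A by (simp add: evm_zero[OF A] left_mult_zero_mat[OF evm_carrier[OF A]])
next
  case (pCons a p)
  have Q: "evm A q \<in> carrier_mat n n" "evm A p \<in> carrier_mat n n" using A by auto
  have "evm A (pCons a p * q) = evm A (Polynomial.smult a q + pCons 0 (p * q))" by simp
  also have "\<dots> = a \<cdot>\<^sub>m evm A q + A * (evm A p * evm A q)"
    by (simp add: evm_add[OF A] evm_smult[OF A] evm_pCons0[OF A] pCons(2))
  also have "\<dots> = (a \<cdot>\<^sub>m 1\<^sub>m n + A * evm A p) * evm A q"
  proof -
    have e1: "(a \<cdot>\<^sub>m 1\<^sub>m n + A * evm A p) * evm A q = (a \<cdot>\<^sub>m 1\<^sub>m n) * evm A q + (A * evm A p) * evm A q"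
      by (rule add_mult_distrib_mat[of _ n n], insert A Q, auto)
    have e2: "(a \<cdot>\<^sub>m 1\<^sub>m n) * evm A q = a \<cdot>\<^sub>m evm A q" using Q by (simp add: mult_smult_assoc_mat[of _ n n _ n])
    have e3: "(A * evm A p) * evm A q = A * (evm A p * evm A q)" using A Q by (simp add: assoc_mult_mat[of _ n n _ n _ n])
    show ?thesis unfolding e1 e2 e3 ..
  qed
  also have "\<dots> = evm A (pCons a p) * evm A q" by (simp add: evm_pCons[OF A])
  finally show ?case .
qed

lemma evm_one: assumes A: "A \<in> carrier_mat n n" shows "evm A 1 = 1\<^sub>m n"
  by (rule eq_matI, insert A, auto simp: evm_def)

lemma evm_power: assumes A: "A \<in> carrier_mat n n"
  shows "evm A (p ^ k) = evm A p ^\<^sub>m k"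
proof (induct k)
  case 0 thus ?case using A by (simp add: evm_one)
next
  case (Suc k)
  have "evm A (p ^ Suc k) = evm A p * evm A p ^\<^sub>m k" by (simp add: evm_mult[OF A] Suc)
  also have "\<dots> = evm A p ^\<^sub>m Suc k" using pow_commute[OF evm_carrier[OF A]] by simp
  finally show ?case .
qed

lemma evm_lin: assumes A: "A \<in> carrier_mat n n"
  shows "evm A [:-a, 1:] = A - a \<cdot>\<^sub>m 1\<^sub>m n"
proof (rule eq_matI)
  fix i j assume "i < dim_row (A - a \<cdot>\<^sub>m 1\<^sub>m n)" "j < dim_col (A - a \<cdot>\<^sub>m 1\<^sub>m n)"
  hence ij: "i < n" "j < n" using A by auto
  have D: "degree [:-a, 1:] \<le> 1" by simp
  show "evm A [:-a, 1:] $$ (i,j) = (A - a \<cdot>\<^sub>m 1\<^sub>m n) $$ (i,j)"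
    using ij A by (simp add: evm_bound[OF A D ij])
qed (insert A, auto)

lemma evm_sym: assumes A: "A \<in> carrier_mat n n" and s: "transpose_mat A = A"
  shows "transpose_mat (evm A p) = evm A p"
proof (rule eq_matI)
  fix i j assume "i < dim_row (evm A p)" "j < dim_col (evm A p)"
  hence ij: "i < n" "j < n" using A by auto
  show "transpose_mat (evm A p) $$ (i,j) = evm A p $$ (i,j)"
    using ij A pow_sym_entry[OF A s] by (simp add: evm_def)
qed (insert A, auto)



lemma prod_upt_lessThan: "prod_list (map f [0..<n]) = (\<Prod>t<n. f t)"
  by (induct n) auto

lemma tri_CH: fixes B :: "real mat" assumes B: "B \<in> carrier_mat n n" and ut: "upper_triangular B"
  shows "k \<le> n \<Longrightarrow> \<forall>i<n. \<forall>j<k. evm B (\<Prod>t<k. [:- B$$(t,t), 1:]) $$ (i,j) = 0"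
proof (induct k)
  case 0 show ?case by simp
next
  case (Suc k)
  let ?M = "evm B (\<Prod>t<k. [:- B$$(t,t), 1:])"
  let ?L = "B - B$$(k,k) \<cdot>\<^sub>m 1\<^sub>m n"
  have M: "?M \<in> carrier_mat n n" using B by simp
  have kn: "k < n" using Suc by auto
  have IH: "\<forall>i<n. \<forall>j<k. ?M $$ (i,j) = 0" using Suc by auto
  have eq: "evm B (\<Prod>t<Suc k. [:- B$$(t,t), 1:]) = ?M * ?L"
    unfolding prod.lessThan_Suc evm_mult[OF B] evm_lin[OF B] ..
  show ?case
  proof (intro allI impI)
    fix i j assume i: "i<n" and j: "j < Suc k"
    have jn: "j < n" using j kn by auto
    have "(?M * ?L) $$ (i,j) = (\<Sum>l<n. ?M $$ (i,l) * ?L $$ (l,j))"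
      by (rule mult_entry[OF M _ i jn], insert B, auto)
    also have "\<dots> = 0"
    proof (rule sum.neutral, intro ballI)
      fix l assume l: "l \<in> {..<n}"
      show "?M $$ (i,l) * ?L $$ (l,j) = 0"
      proof (cases "l < k")
        case True with IH i show ?thesis by simp
      next
        case False
        have "?L $$ (l,j) = B $$ (l,j) - B$$(k,k) * (if l = j then 1 else 0)"
          using l jn B by auto
        also have "\<dots> = 0"
        proof (cases "j < l")
          case True
          hence "B $$ (l,j) = 0" using ut l B unfolding upper_triangular_def by auto
          thus ?thesis using True by simp
        next
          case False
          with \<open>\<not> l < k\<close> j have "l = k" "j = k" by auto
          thus ?thesis by simp
        qed
        finally show ?thesis by simp
      qed
    qed
    finally show "evm B (\<Prod>t<Suc k. [:- B$$(t,t), 1:]) $$ (i,j) = 0" unfolding eq .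
  qed
qed

lemma triple_swap: "(\<Sum>j\<in>J. \<Sum>m\<in>M. \<Sum>l\<in>L. f j m l) = (\<Sum>m\<in>M. \<Sum>l\<in>L. \<Sum>j\<in>J. f j m l)"
  by (subst sum.swap, rule sum.cong[OF refl], rule sum.swap)

lemma CH_split: fixes A :: "real mat" assumes A: "A \<in> carrier_mat n n"
  and c: "char_poly A = (\<Prod>a\<leftarrow>es. [:-a, 1:])"
  shows "evm A (char_poly A) = 0\<^sub>m n n"
proof -
  obtain B P Q where sd: "schur_decomposition A es = (B,P,Q)" by (cases "schur_decomposition A es", auto)
  from schur_decomposition[OF A c sd] have sim: "similar_mat_wit A B P Q" and ut: "upper_triangular B"
    and dg: "diag_mat B = es" by auto
  have dA: "n = dim_row A" using A by auto
  note W = similar_mat_witD[OF dA sim]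
  have B: "B \<in> carrier_mat n n" and P: "P \<in> carrier_mat n n" and Q: "Q \<in> carrier_mat n n" using W by auto
  let ?f = "char_poly A"
  have f: "?f = (\<Prod>t<n. [:- B$$(t,t), 1:])"
    unfolding c dg[symmetric] diag_mat_def using B by (simp add: prod_upt_lessThan[of "\<lambda>t. [:- B$$(t,t), 1:]", symmetric] comp_def)
  have ZB: "\<And>l m. l < n \<Longrightarrow> m < n \<Longrightarrow> evm B ?f $$ (l,m) = 0"
    using tri_CH[OF B ut order.refl] f by auto
  have pw: "\<And>j. A ^\<^sub>m j = P * B ^\<^sub>m j * Q" by (rule similar_mat_wit_pow_id[OF sim])
  show ?thesis
  proof (rule eq_matI)
    fix a b assume "a < dim_row (0\<^sub>m n n)" "b < dim_col (0\<^sub>m n n)"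
    hence ab: "a < n" "b < n" by auto
    have ent: "\<And>j. (A ^\<^sub>m j) $$ (a,b) = (\<Sum>m<n. (\<Sum>l<n. P$$(a,l) * (B ^\<^sub>m j)$$(l,m)) * Q$$(m,b))"
    proof -
      fix j
      have PB: "P * B ^\<^sub>m j \<in> carrier_mat n n" using P B by auto
      have "(A ^\<^sub>m j) $$ (a,b) = (\<Sum>m<n. (P * B ^\<^sub>m j)$$(a,m) * Q$$(m,b))"
        unfolding pw by (rule mult_entry[OF PB Q ab])
      also have "\<dots> = (\<Sum>m<n. (\<Sum>l<n. P$$(a,l) * (B ^\<^sub>m j)$$(l,m)) * Q$$(m,b))"
        by (rule sum.cong[OF refl], subst mult_entry[OF P _ ab(1)], insert B, auto)
      finally show "(A ^\<^sub>m j) $$ (a,b) = (\<Sum>m<n. (\<Sum>l<n. P$$(a,l) * (B ^\<^sub>m j)$$(l,m)) * Q$$(m,b))" .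
    qed
    have "evm A ?f $$ (a,b) = (\<Sum>j\<le>degree ?f. coeff ?f j * (A ^\<^sub>m j) $$ (a,b))"
      by (rule evm_bound[OF A order.refl ab])
    also have "\<dots> = (\<Sum>j\<le>degree ?f. \<Sum>m<n. \<Sum>l<n. coeff ?f j * P$$(a,l) * (B ^\<^sub>m j)$$(l,m) * Q$$(m,b))"
      unfolding ent by (simp add: sum_distrib_left sum_distrib_right mult.assoc)
    also have "\<dots> = (\<Sum>m<n. \<Sum>l<n. \<Sum>j\<le>degree ?f. coeff ?f j * P$$(a,l) * (B ^\<^sub>m j)$$(l,m) * Q$$(m,b))"
      by (rule triple_swap)
    also have "\<dots> = (\<Sum>m<n. \<Sum>l<n. P$$(a,l) * Q$$(m,b) * evm B ?f $$ (l,m))"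
    proof (intro sum.cong refl)
      fix m l assume "m \<in> {..<n}" "l \<in> {..<n}"
      hence lm: "l < n" "m < n" by auto
      show "(\<Sum>j\<le>degree ?f. coeff ?f j * P$$(a,l) * (B ^\<^sub>m j)$$(l,m) * Q$$(m,b)) = P$$(a,l) * Q$$(m,b) * evm B ?f $$ (l,m)"
        unfolding evm_bound[OF B order.refl lm] by (simp add: sum_distrib_left mult_ac)
    qed
    also have "\<dots> = 0" using ZB by simp
    finally show "evm A ?f $$ (a,b) = 0\<^sub>m n n $$ (a,b)" using ab by simp
  qed (insert A, auto)
qed

lemma sym_real_eig: fixes A :: "real mat" assumes A: "A \<in> carrier_mat n n" and s: "transpose_mat A = A"
  and ev: "eigenvalue (of_real_hom.mat_hom A) (a :: complex)"
  shows "cnj a = a"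
proof -
  let ?C = "of_real_hom.mat_hom A"
  have As: "\<And>i j. i < n \<Longrightarrow> j < n \<Longrightarrow> A $$ (j,i) = A $$ (i,j)"
  proof -
    fix i j assume "i < n" "j < n"
    hence "transpose_mat A $$ (i,j) = A $$ (j,i)" using A by simp
    thus "A $$ (j,i) = A $$ (i,j)" using s by simp
  qed
  from ev obtain v where v: "v \<in> carrier_vec n" "v \<noteq> 0\<^sub>v n" "?C *\<^sub>v v = a \<cdot>\<^sub>v v"
    unfolding eigenvalue_def eigenvector_def using A by auto
  have Cv: "\<And>i. i < n \<Longrightarrow> (\<Sum>j<n. of_real (A $$ (i,j)) * v $ j) = a * v $ i"
  proof -
    fix i assume i: "i < n"
    have "(?C *\<^sub>v v) $ i = (\<Sum>j<n. of_real (A $$ (i,j)) * v $ j)"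
      using A v(1) i by (auto simp: scalar_prod_def lessThan_atLeast0 intro!: sum.cong)
    moreover have "(?C *\<^sub>v v) $ i = a * v $ i" unfolding v(3) using v i by simp
    ultimately show "(\<Sum>j<n. of_real (A $$ (i,j)) * v $ j) = a * v $ i" by simp
  qed
  define T where "T = (\<Sum>i<n. cnj (v$i) * (\<Sum>j<n. of_real (A $$ (i,j)) * v $ j))"
  define S where "S = (\<Sum>i<n. cnj (v$i) * v$i)"
  have TS: "T = a * S"
  proof -
    have "T = (\<Sum>i<n. cnj (v$i) * (a * v$i))" unfolding T_def using Cv by auto
    thus ?thesis unfolding S_def by (simp add: sum_distrib_left mult_ac)
  qed
  have cT: "cnj T = T"
  proof -
    have "cnj T = (\<Sum>i<n. \<Sum>j<n. v$i * of_real (A$$(i,j)) * cnj (v$j))"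
      unfolding T_def by (simp add: sum_distrib_left mult_ac)
    also have "\<dots> = (\<Sum>j<n. \<Sum>i<n. v$i * of_real (A$$(i,j)) * cnj (v$j))" by (rule sum.swap)
    also have "\<dots> = T" unfolding T_def by (auto simp: sum_distrib_left mult_ac As intro!: sum.cong)
    finally show ?thesis .
  qed
  have cS: "cnj S = S" unfolding S_def by (simp add: mult.commute)
  have S': "S = of_real (\<Sum>i<n. (cmod (v$i))^2)"
    unfolding S_def of_real_sum by (rule sum.cong, simp_all add: complex_norm_square mult.commute del: of_real_power)
  have S0: "S \<noteq> 0"
  proof
    assume "S = 0"
    hence "(\<Sum>i<n. (cmod (v$i))^2) = 0" by (metis S' of_real_eq_0_iff)
    hence "\<forall>i\<in>{..<n}. (cmod (v$i))^2 = 0" by (subst sum_nonneg_eq_0_iff[symmetric], auto)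
    hence "v = 0\<^sub>v n" using v(1) by (intro eq_vecI, auto)
    thus False using v(2) by simp
  qed
  have "cnj a * S = a * S" using cT cS TS by (metis complex_cnj_mult)
  thus ?thesis using S0 by simp
qed

lemma sym_char_poly_split: fixes A :: "real mat" assumes A: "A \<in> carrier_mat n n" and s: "transpose_mat A = A"
  shows "\<exists>es. char_poly A = (\<Prod>a\<leftarrow>es. [:-a, 1:]) \<and> length es = n"
proof -
  let ?C = "of_real_hom.mat_hom A :: complex mat"
  have C: "?C \<in> carrier_mat n n" using A by auto
  from char_poly_factorized[OF C] obtain as where cas': "char_poly ?C = (\<Prod>a\<leftarrow>as. [:- a, 1:]) \<and> length as = n" ..
  hence cas: "char_poly ?C = (\<Prod>a\<leftarrow>as. [:- a, 1:])" "length as = n" by auto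
  have real: "\<forall>a\<in>set as. of_real (Re a) = a"
  proof
    fix a assume "a \<in> set as"
    hence "poly (char_poly ?C) a = 0" unfolding cas(1) by (rule linear_poly_root)
    hence "eigenvalue ?C a" using eigenvalue_root_char_poly[OF C] by simp
    hence "cnj a = a" by (rule sym_real_eig[OF A s])
    thus "of_real (Re a) = a" by (simp add: complex_eq_iff)
  qed
  have gen: "\<And>bs. \<forall>a\<in>set bs. of_real (Re a) = a \<Longrightarrow>
     map_poly of_real (\<Prod>a\<leftarrow>map Re bs. [:-a, 1:]) = (\<Prod>a\<leftarrow>bs. [:-a, 1:] :: complex poly)"
  proof -
    fix bs :: "complex list"
    show "\<forall>a\<in>set bs. of_real (Re a) = a \<Longrightarrow>
     map_poly of_real (\<Prod>a\<leftarrow>map Re bs. [:-a, 1:]) = (\<Prod>a\<leftarrow>bs. [:-a, 1:])"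
    proof (induct bs)
      case Nil show ?case by simp
    next
      case (Cons b bs)
      have "map_poly of_real (\<Prod>a\<leftarrow>map Re (b#bs). [:-a, 1:]) = map_poly of_real [:-Re b, 1:] * (map_poly of_real (\<Prod>a\<leftarrow>map Re bs. [:-a, 1:]) :: complex poly)"
        by (simp only: list.map prod_list.Cons of_real_poly_hom.hom_mult)
      also have "\<dots> = [:-b, 1:] * (\<Prod>a\<leftarrow>bs. [:-a, 1:])" using Cons by simp
      finally show ?case by (simp only: list.map prod_list.Cons)
    qed
  qed
  have "(map_poly of_real (\<Prod>a\<leftarrow>map Re as. [:-a, 1:]) :: complex poly) = map_poly of_real (char_poly A)"
    unfolding gen[OF real] cas(1)[symmetric] of_real_hom.char_poly_hom[OF A] ..
  hence "char_poly A = (\<Prod>a\<leftarrow>map Re as. [:-a, 1:])" by simp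
  thus ?thesis using cas(2) by (intro exI[of _ "map Re as"], simp)
qed



lemma sym_sq_zero: fixes M :: "real mat" assumes M: "M \<in> carrier_mat n n" and s: "transpose_mat M = M"
  and z: "M * M = 0\<^sub>m n n" shows "M = 0\<^sub>m n n"
proof (rule eq_matI)
  fix i l assume "i < dim_row (0\<^sub>m n n)" "l < dim_col (0\<^sub>m n n)"
  hence il: "i < n" "l < n" by auto
  have Ms: "\<And>a b. a < n \<Longrightarrow> b < n \<Longrightarrow> M $$ (b,a) = M $$ (a,b)"
  proof -
    fix a b assume "a < n" "b < n"
    hence "transpose_mat M $$ (a,b) = M $$ (b,a)" using M by simp
    thus "M $$ (b,a) = M $$ (a,b)" using s by simp
  qed
  have "(\<Sum>t<n. (M $$ (i,t))^2) = (M * M) $$ (i,i)"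
    using mult_entry[OF M M il(1) il(1)] Ms il by (auto simp: power2_eq_square intro!: sum.cong)
  also have "\<dots> = 0" using z il by simp
  finally have "\<forall>t\<in>{..<n}. (M $$ (i,t))^2 = 0" by (subst sum_nonneg_eq_0_iff[symmetric], auto)
  thus "M $$ (i,l) = 0\<^sub>m n n $$ (i,l)" using il by auto
qed (insert M, auto)

lemma sym_nilp: fixes M :: "real mat" assumes M: "M \<in> carrier_mat n n" and s: "transpose_mat M = M"
  shows "M ^\<^sub>m (Suc m) = 0\<^sub>m n n \<Longrightarrow> M = 0\<^sub>m n n"
proof (induct m)
  case 0 thus ?case using M by simp
next
  case (Suc m)
  let ?N = "M ^\<^sub>m (Suc m)"
  have N: "?N \<in> carrier_mat n n" by (rule pow_carrier_mat[OF M])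
  have "?N * ?N = M ^\<^sub>m (Suc (Suc m) + m)" using pow_add_mat[OF M, of "Suc m" "Suc m"] by simp
  also have "\<dots> = M ^\<^sub>m (Suc (Suc m)) * M ^\<^sub>m m" by (rule pow_add_mat[OF M])
  also have "\<dots> = 0\<^sub>m n n" unfolding Suc(2) by (rule left_mult_zero_mat, insert M, simp)
  finally have "?N = 0\<^sub>m n n" by (rule sym_sq_zero[OF N pow_sym[OF M s]])
  thus ?case by (rule Suc(1))
qed

lemma prod_dvd_pow: assumes "set bs \<subseteq> set ds"
  shows "(\<Prod>a\<leftarrow>bs. [:-a, 1:]) dvd (\<Prod>a\<leftarrow>ds. [:-a, 1:] :: real poly) ^ length bs"
  using assms
proof (induct bs)
  case Nil show ?case by simp
next
  case (Cons b bs)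
  have "[:-b, 1:] dvd (\<Prod>a\<leftarrow>ds. [:-a, 1:] :: real poly)"
    by (rule prod_list_dvd, insert Cons(2), auto)
  moreover have "(\<Prod>a\<leftarrow>bs. [:-a, 1:]) dvd (\<Prod>a\<leftarrow>ds. [:-a, 1:] :: real poly) ^ length bs"
    using Cons by auto
  ultimately show ?case unfolding list.map prod_list.Cons length_Cons power_Suc by (rule mult_dvd_mono)
qed

lemma trace_poly: fixes A X :: "real mat" assumes A: "A \<in> carrier_mat n n" and X: "X \<in> carrier_mat n n"
  and z: "evm A r = 0\<^sub>m n n" and D: "degree r \<le> D"
  shows "(\<Sum>j\<le>D. coeff r j * (\<Sum>i<n. (A ^\<^sub>m j * X) $$ (i,i))) = 0"
proof -
  have "(\<Sum>j\<le>D. coeff r j * (\<Sum>i<n. (A ^\<^sub>m j * X) $$ (i,i)))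
      = (\<Sum>j\<le>D. \<Sum>i<n. \<Sum>l<n. coeff r j * (A ^\<^sub>m j) $$ (i,l) * X $$ (l,i))"
  proof (rule sum.cong[OF refl])
    fix j
    have "(\<Sum>i<n. (A ^\<^sub>m j * X) $$ (i,i)) = (\<Sum>i<n. \<Sum>l<n. (A ^\<^sub>m j) $$ (i,l) * X $$ (l,i))"
      by (rule sum.cong[OF refl], rule mult_entry, insert A X, auto)
    thus "coeff r j * (\<Sum>i<n. (A ^\<^sub>m j * X) $$ (i,i)) = (\<Sum>i<n. \<Sum>l<n. coeff r j * (A ^\<^sub>m j) $$ (i,l) * X $$ (l,i))"
      by (simp add: sum_distrib_left mult.assoc)
  qed
  also have "\<dots> = (\<Sum>i<n. \<Sum>l<n. \<Sum>j\<le>D. coeff r j * (A ^\<^sub>m j) $$ (i,l) * X $$ (l,i))"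
    by (rule triple_swap)
  also have "\<dots> = (\<Sum>i<n. \<Sum>l<n. evm A r $$ (i,l) * X $$ (l,i))"
  proof (intro sum.cong refl)
    fix i l assume "i \<in> {..<n}" "l \<in> {..<n}"
    hence il: "i < n" "l < n" by auto
    show "(\<Sum>j\<le>D. coeff r j * (A ^\<^sub>m j) $$ (i,l) * X $$ (l,i)) = evm A r $$ (i,l) * X $$ (l,i)"
      unfolding evm_bound[OF A D il] by (simp add: sum_distrib_right)
  qed
  also have "\<dots> = 0" using z by simp
  finally show ?thesis .
qed

theorem trace_all: fixes A X :: "real mat" assumes A: "A \<in> carrier_mat n n" and s: "transpose_mat A = A"
  and X: "X \<in> carrier_mat n n"
  and H: "\<forall>k<length (distinct_eigenvalues A). (\<Sum>i<n. (A ^\<^sub>m k * X) $$ (i,i)) = 0"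
  shows "(\<Sum>i<n. (A ^\<^sub>m k * X) $$ (i,i)) = 0"
proof -
  define st where "st k = (\<Sum>i<n. (A ^\<^sub>m k * X) $$ (i,i))" for k
  obtain es where es: "char_poly A = (\<Prod>a\<leftarrow>es. [:-a, 1:])" and len: "length es = n"
    using sym_char_poly_split[OF A s] by blast
  have CH: "evm A (char_poly A) = 0\<^sub>m n n" by (rule CH_split[OF A es])
  have R: "{x. poly (char_poly A) x = 0} = set es" unfolding es
    by (auto simp: poly_prod_list_zero_iff)
  define ds where "ds = distinct_eigenvalues A"
  have ds: "set ds = set es" "distinct ds" unfolding ds_def distinct_eigenvalues_def R by auto
  define p where "p = (\<Prod>a\<leftarrow>ds. [:-a, 1:] :: real poly)"
  have "char_poly A dvd p ^ n" unfolding es p_def len[symmetric] by (rule prod_dvd_pow, simp add: ds)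
  then obtain g where g: "p ^ n = char_poly A * g" by (elim dvdE)
  have "evm A p ^\<^sub>m n = 0\<^sub>m n n"
  proof -
    have "evm A p ^\<^sub>m n = evm A (p ^ n)" by (simp add: evm_power[OF A])
    also have "\<dots> = evm A (char_poly A) * evm A g" unfolding g by (rule evm_mult[OF A])
    also have "\<dots> = 0\<^sub>m n n" unfolding CH using A by simp
    finally show ?thesis .
  qed
  hence P0: "evm A p = 0\<^sub>m n n"
  proof (cases n)
    case 0 thus ?thesis using A by (intro eq_matI, auto)
  next
    case (Suc m)
    assume "evm A p ^\<^sub>m n = 0\<^sub>m n n"
    thus ?thesis unfolding Suc using sym_nilp[OF evm_carrier[OF A] evm_sym[OF A s]] Suc by auto
  qed
  have mon: "monic p" unfolding p_def by (rule monic_prod_list, auto)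
  have dp: "degree p = length ds" unfolding p_def by (rule degree_linear_factors)
  have "st k = 0"
  proof (induct k rule: less_induct)
    case (less k)
    show ?case
    proof (cases "k < length ds")
      case True thus ?thesis using H unfolding st_def ds_def by auto
    next
      case False
      define r where "r = monom 1 (k - length ds) * p"
      have p0: "p \<noteq> 0" using mon by auto
      have dr: "degree r = k" unfolding r_def using False dp p0
        by (subst degree_mult_eq, auto simp: degree_monom_eq)
      have cr: "coeff r k = 1" unfolding r_def using False mon dp
        by (simp add: coeff_monom_mult)
      have zr: "evm A r = 0\<^sub>m n n" unfolding r_def evm_mult[OF A] P0 using A by simp
      have "(\<Sum>j\<le>k. coeff r j * st j) = 0" unfolding st_def by (rule trace_poly[OF A X zr], simp add: dr)
      moreover have "(\<Sum>j\<le>k. coeff r j * st j) = (\<Sum>j<k. coeff r j * st j) + coeff r k * st k"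
        by (simp add: lessThan_Suc_atMost[symmetric])
      moreover have "(\<Sum>j<k. coeff r j * st j) = 0" using less by auto
      ultimately show ?thesis using cr by simp
    qed
  qed
  thus ?thesis unfolding st_def .
qed



definition sh :: "nat \<Rightarrow> nat \<Rightarrow> nat \<Rightarrow> nat" where "sh n i t = (i + t) mod n"
definition cd :: "nat \<Rightarrow> nat \<Rightarrow> nat \<Rightarrow> nat" where
  "cd n i j = (let d = (if i \<le> j then j - i else i - j) in min d (n - d))"

lemma sh_lt: "0 < n \<Longrightarrow> sh n i t < n" unfolding sh_def by simp

lemma sh_if: assumes "i < n" "t \<le> n" shows "sh n i t = (if i + t < n then i + t else i + t - n)"
proof (cases "i + t < n")
  case True thus ?thesis unfolding sh_def by simp
next
  case False
  hence "(i + t) mod n = (i + t - n) mod n" by (simp add: le_mod_geq)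
  also have "\<dots> = i + t - n" using assms False by simp
  finally show ?thesis using False unfolding sh_def by simp
qed

lemma sh_sh: "sh n (sh n i a) b = sh n i (a + b)" unfolding sh_def by (simp add: mod_add_left_eq add.assoc)

lemma sh_0: "i < n \<Longrightarrow> sh n i 0 = i" unfolding sh_def by simp
lemma sh_n: "i < n \<Longrightarrow> sh n i n = i" unfolding sh_def by simp

lemma cd_sym: "cd n i j = cd n j i" unfolding cd_def Let_def by auto

lemma cd_sh2: assumes "i < n" "a < n" "b < n"
  shows "cd n (sh n i a) (sh n i b) = (let d = (if a \<le> b then b - a else a - b) in min d (n - d))"
  using assms unfolding sh_if[OF assms(1) less_imp_le[OF assms(2)]] sh_if[OF assms(1) less_imp_le[OF assms(3)]]
    cd_def Let_def by (auto split: if_splits)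

lemma cd_sh: assumes "i < n" "t < n" shows "cd n i (sh n i t) = min t (n - t)"
  using cd_sh2[OF assms(1) _ assms(2), of 0] assms by (simp add: sh_0 Let_def)

lemma l_as_sh: assumes "i < n" "l < n" shows "\<exists>t<n. l = sh n i t"
proof (cases "i \<le> l")
  case True thus ?thesis using assms by (intro exI[of _ "l - i"], auto simp: sh_if)
next
  case False thus ?thesis using assms by (intro exI[of _ "l + n - i"], auto simp: sh_if)
qed

lemma cd_tri: assumes "i < n" "j < n" "l < n" shows "cd n i j \<le> cd n i l + cd n l j"
  using assms unfolding cd_def Let_def by (auto split: if_splits)

lemma cd_le: "cd n i j \<le> n div 2" unfolding cd_def Let_def by auto

lemma cd_0: "cd n i j = 0 \<Longrightarrow> i < n \<Longrightarrow> j < n \<Longrightarrow> i = j" unfolding cd_def Let_def by (auto split: if_splits)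

lemma sh_inj: assumes "i < n" "a < n" "b < n" "sh n i a = sh n i b" shows "a = b"
  using assms unfolding sh_if[OF assms(1) less_imp_le[OF assms(2)]] sh_if[OF assms(1) less_imp_le[OF assms(3)]]
  by (auto split: if_splits)

lemma sum_sh: assumes i: "i < n" shows "(\<Sum>l<n. f l) = (\<Sum>t<n. f (sh n i t))"
proof -
  have inj: "inj_on (sh n i) {..<n}" using sh_inj[OF i] by (auto intro: inj_onI)
  have img: "sh n i ` {..<n} = {..<n}"
  proof
    show "sh n i ` {..<n} \<subseteq> {..<n}" using sh_lt i by auto
    show "{..<n} \<subseteq> sh n i ` {..<n}" using l_as_sh[OF i] by auto
  qed
  show ?thesis using sum.reindex[OF inj, of f] img by simp
qed

lemma sum1: fixes n :: nat assumes "a < n" "\<And>l. l < n \<Longrightarrow> l \<noteq> a \<Longrightarrow> f l = 0" shows "(\<Sum>l<n. f l) = f a"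
proof -
  have "(\<Sum>l<n. f l) = f a + (\<Sum>l\<in>{..<n} - {a}. f l)" using assms(1) by (intro sum.remove, auto)
  also have "(\<Sum>l\<in>{..<n} - {a}. f l) = 0" using assms(2) by (intro sum.neutral, auto)
  finally show ?thesis by simp
qed

lemma sum2: fixes n :: nat assumes "a < n" "b < n" "a \<noteq> b" "\<And>l. l < n \<Longrightarrow> l \<noteq> a \<Longrightarrow> l \<noteq> b \<Longrightarrow> f l = 0"
  shows "(\<Sum>l<n. f l) = f a + f b"
proof -
  have "(\<Sum>l<n. f l) = f a + (\<Sum>l\<in>{..<n} - {a}. f l)" using assms(1) by (intro sum.remove, auto)
  also have "(\<Sum>l\<in>{..<n} - {a}. f l) = f b + (\<Sum>l\<in>{..<n} - {a} - {b}. f l)"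
    using assms by (subst sum.remove[of _ b], auto)
  also have "(\<Sum>l\<in>{..<n} - {a} - {b}. f l) = 0" using assms(4) by (intro sum.neutral, auto)
  finally show ?thesis by simp
qed



lemma arith1: assumes "t < n" "2 * Suc k < n" "min t (n - t) \<le> k"
  "(let d = (if t \<le> Suc k then Suc k - t else t - Suc k) in min d (n - d)) \<le> 1"
  shows "t = k" using assms by (auto simp: Let_def split: if_splits)

lemma arith2: assumes "t < n" "2 * Suc k = n" "min t (n - t) \<le> k"
  "(let d = (if t \<le> Suc k then Suc k - t else t - Suc k) in min d (n - d)) \<le> 1"
  shows "t = k \<or> t = Suc (Suc k)" using assms by (auto simp: Let_def split: if_splits)

lemma arith3: assumes "t < n" "t \<noteq> 0" "2 * Suc d \<le> n" "1 \<le> d"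
  "(let e = (if 1 \<le> t then t - 1 else 1 - t) in min e (n - e)) \<le> 1"
  shows "(let e = (if t \<le> Suc d then Suc d - t else t - Suc d) in min e (n - e)) \<le> d"
  using assms by (auto simp: Let_def split: if_splits)

lemma arith4: assumes "t < n" "t \<noteq> Suc (Suc d)" "2 * Suc d \<le> n" "1 \<le> d"
  "(let e = (if t \<le> Suc d then Suc d - t else t - Suc d) in min e (n - e)) \<le> 1"
  shows "(let e = (if 1 \<le> t then t - 1 else 1 - t) in min e (n - e)) \<le> d"
  using assms by (auto simp: Let_def split: if_splits)

lemma arith5: assumes "t < n" "min t (n - t) \<le> Suc d" "\<not> min t (n - t) \<le> d"
  shows "t = Suc d \<or> t = n - Suc d"
  using assms by auto

locale cyc =
  fixes n :: nat and A :: "real mat"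
  assumes n3: "n \<ge> 3" and AS: "A \<in> S_graph n (cycle_edge n)"
begin

lemma A: "A \<in> carrier_mat n n" using AS unfolding S_graph_def by auto
lemma As: "transpose_mat A = A" using AS unfolding S_graph_def by auto
lemma Anz: "i < n \<Longrightarrow> j < n \<Longrightarrow> i \<noteq> j \<Longrightarrow> A $$ (i,j) \<noteq> 0 \<longleftrightarrow> cycle_edge n i j"
  using AS unfolding S_graph_def by auto
lemma Asym: assumes "i < n" "j < n" shows "A $$ (j,i) = A $$ (i,j)"
proof -
  have "transpose_mat A $$ (i,j) = A $$ (j,i)" using assms A by simp
  thus ?thesis using As by simp
qed
lemma n0: "0 < n" using n3 by auto

definition w :: "nat \<Rightarrow> real" where "w i = A $$ (i, sh n i 1)"

lemma edge_sh: assumes "i < n" shows "cycle_edge n i (sh n i 1)"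
  unfolding cycle_edge_def using assms n3 sh_lt[OF n0] by (auto simp: sh_def mod_if split: if_splits)

lemma w_nz: "i < n \<Longrightarrow> w i \<noteq> 0"
  unfolding w_def using Anz[of i "sh n i 1"] edge_sh[of i] sh_lt[OF n0] unfolding cycle_edge_def by auto

lemma A_back: "i < n \<Longrightarrow> A $$ (sh n i 1, i) = w i"
  unfolding w_def using Asym sh_lt[OF n0] by auto

lemma nz_cd: assumes i: "i < n" and j: "j < n" and nz: "A $$ (i,j) \<noteq> 0" shows "cd n i j \<le> 1"
proof (cases "i = j")
  case True thus ?thesis by (simp add: cd_def)
next
  case False
  hence "cycle_edge n i j" using Anz i j nz by auto
  hence "j = sh n i 1 \<or> i = sh n j 1" unfolding cycle_edge_def sh_def by auto
  thus ?thesis using cd_sh[OF i, of 1] cd_sh[OF j, of 1] n3 cd_sym[of n i j] by auto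
qed

lemma cd1_nz: assumes i: "i < n" and j: "j < n" and c: "cd n i j = 1" shows "A $$ (i,j) \<noteq> 0"
proof -
  obtain t where t: "t < n" "j = sh n i t" using l_as_sh[OF i j] by auto
  have "min t (n - t) = 1" using c cd_sh[OF i t(1)] t by simp
  hence "t = 1 \<or> t = n - 1" by auto
  thus ?thesis
  proof
    assume "t = 1" thus ?thesis using w_nz[OF i] t unfolding w_def by simp
  next
    assume t1: "t = n - 1"
    have "sh n j 1 = i" unfolding t(2) sh_sh t1 using n3 sh_n[OF i] by simp
    thus ?thesis using A_back[OF j] w_nz[OF j] by simp
  qed
qed

lemma pow_zero: "i < n \<Longrightarrow> j < n \<Longrightarrow> k < cd n i j \<Longrightarrow> (A ^\<^sub>m k) $$ (i,j) = 0"
proof (induct k arbitrary: j)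
  case 0
  have "i \<noteq> j" using 0 by (auto simp: cd_def)
  thus ?case using 0 A by simp
next
  case (Suc k)
  have "(A ^\<^sub>m Suc k) $$ (i,j) = (A ^\<^sub>m k * A) $$ (i,j)" by simp
  also have "\<dots> = (\<Sum>l<n. (A ^\<^sub>m k) $$ (i,l) * A $$ (l,j))"
    by (rule mult_entry, insert A Suc, auto)
  also have "\<dots> = 0"
  proof (rule sum.neutral, intro ballI)
    fix l assume l: "l \<in> {..<n}"
    show "(A ^\<^sub>m k) $$ (i,l) * A $$ (l,j) = 0"
    proof (cases "A $$ (l,j) = 0")
      case False
      hence "cd n l j \<le> 1" using nz_cd l Suc by auto
      moreover have "cd n i j \<le> cd n i l + cd n l j" using cd_tri Suc l by auto
      ultimately have "k < cd n i l" using Suc by auto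
      thus ?thesis using Suc l by auto
    qed simp
  qed
  finally show ?case .
qed

definition P :: "nat \<Rightarrow> nat \<Rightarrow> real" where "P k i = (\<Prod>t<k. w (sh n i t))"

lemma P_Suc: "P (Suc k) i = P k i * w (sh n i k)" unfolding P_def by simp

lemma P_Suc': assumes "i < n" shows "P (Suc k) i = w i * P k (sh n i 1)"
  unfolding P_def prod.lessThan_Suc_shift sh_sh using sh_0[OF assms] by simp

lemma P_nz: "i < n \<Longrightarrow> P k i \<noteq> 0"
  unfolding P_def using w_nz sh_lt[OF n0] by auto

lemma pow_path: "2 * k \<le> n \<Longrightarrow> i < n \<Longrightarrow>
   (A ^\<^sub>m k) $$ (i, sh n i k) = P k i + (if 2 * k = n then P k (sh n i k) else 0)"
proof (induct k arbitrary: i)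
  case 0 thus ?case using A n3 by (simp add: sh_0 P_def)
next
  case (Suc k i)
  note i = Suc(3)
  let ?j = "sh n i (Suc k)"
  have j: "?j < n" by (rule sh_lt[OF n0])
  let ?f = "\<lambda>t. (A ^\<^sub>m k) $$ (i, sh n i t) * A $$ (sh n i t, ?j)"
  have "(A ^\<^sub>m Suc k) $$ (i,?j) = (A ^\<^sub>m k * A) $$ (i,?j)" by simp
  also have "\<dots> = (\<Sum>l<n. (A ^\<^sub>m k) $$ (i,l) * A $$ (l,?j))"
    by (rule mult_entry, insert A i j, auto)
  also have "\<dots> = (\<Sum>t<n. ?f t)" by (rule sum_sh[OF i])
  finally have S: "(A ^\<^sub>m Suc k) $$ (i,?j) = (\<Sum>t<n. ?f t)" .
  have zero: "\<And>t. t < n \<Longrightarrow> ?f t \<noteq> 0 \<Longrightarrow> min t (n - t) \<le> k \<and>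
      (let d = (if t \<le> Suc k then Suc k - t else t - Suc k) in min d (n - d)) \<le> 1"
  proof -
    fix t assume t: "t < n" and nz: "?f t \<noteq> 0"
    have l: "sh n i t < n" by (rule sh_lt[OF n0])
    have c: "cd n i (sh n i t) \<le> k"
    proof (rule ccontr)
      assume "\<not> cd n i (sh n i t) \<le> k"
      hence "k < cd n i (sh n i t)" by simp
      hence "(A ^\<^sub>m k) $$ (i, sh n i t) = 0" using pow_zero[OF i l] by simp
      thus False using nz by simp
    qed
    hence 1: "min t (n - t) \<le> k" unfolding cd_sh[OF i t] .
    have "cd n (sh n i t) ?j \<le> 1" using nz nz_cd[OF l j] by auto
    hence "(let d = (if t \<le> Suc k then Suc k - t else t - Suc k) in min d (n - d)) \<le> 1"
      using cd_sh2[OF i t, of "Suc k"] Suc(2) by simp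
    thus "min t (n - t) \<le> k \<and> (let d = (if t \<le> Suc k then Suc k - t else t - Suc k) in min d (n - d)) \<le> 1"
      using 1 by simp
  qed
  have fk: "?f k = P (Suc k) i" if "2 * k \<noteq> n"
  proof -
    have "(A ^\<^sub>m k) $$ (i, sh n i k) = P k i" using Suc(1)[OF _ i] Suc(2) that by simp
    moreover have "A $$ (sh n i k, ?j) = w (sh n i k)" unfolding w_def sh_sh by simp
    ultimately show ?thesis by (simp add: P_Suc)
  qed
  show ?case
  proof (cases "2 * Suc k = n")
    case False
    hence lt: "2 * Suc k < n" using Suc(2) by simp
    have "(\<Sum>t<n. ?f t) = ?f k"
      by (rule sum1, insert lt, force, insert zero arith1 lt, blast)
    moreover have "2 * k \<noteq> n" using lt by simp
    ultimately show ?thesis using S fk False by simp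
  next
    case True
    have k1: "k \<ge> 1" using True n3 by simp
    have "(\<Sum>t<n. ?f t) = ?f k + ?f (Suc (Suc k))"
      by (rule sum2, insert True k1, simp, simp, simp, insert zero arith2 True, blast)
    moreover have "?f k = P (Suc k) i" using fk True by simp
    moreover have "?f (Suc (Suc k)) = P (Suc k) ?j"
    proof -
      let ?l = "sh n i (Suc (Suc k))"
      have l: "?l < n" by (rule sh_lt[OF n0])
      have e: "Suc (Suc k) + k = n" using True by simp
      have li: "sh n ?l k = i" unfolding sh_sh e using sh_n[OF i] .
      have "(A ^\<^sub>m k) $$ (i, ?l) = (A ^\<^sub>m k) $$ (?l, i)" by (rule pow_sym_entry[OF A As i l])
      also have "\<dots> = P k ?l" using Suc(1)[OF _ l] True li by simp
      finally have 1: "(A ^\<^sub>m k) $$ (i, ?l) = P k ?l" .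
      have lj: "?l = sh n ?j 1" unfolding sh_sh by simp
      have 2: "A $$ (?l, ?j) = w ?j" unfolding lj by (rule A_back[OF j])
      show ?thesis using 1 2 P_Suc'[OF j, of k] lj by simp
    qed
    ultimately show ?thesis using S True by simp
  qed
qed

end



context cyc begin

lemma main_comb:
  fixes X :: "real mat"
  assumes X: "X \<in> carrier_mat n n" and Xs: "transpose_mat X = X"
  and AX: "\<forall>i<n. \<forall>j<n. A $$ (i,j) * X $$ (i,j) = 0"
  and Xd: "\<forall>i<n. X $$ (i,i) = 0"
  and comm: "A * X - X * A = 0\<^sub>m n n"
  and tr: "\<And>k. (\<Sum>i<n. (A ^\<^sub>m k * X) $$ (i,i)) = 0"
  shows "X = 0\<^sub>m n n"
proof -
  have Xsym: "\<And>i j. i < n \<Longrightarrow> j < n \<Longrightarrow> X $$ (j,i) = X $$ (i,j)"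
  proof -
    fix i j assume "i < n" "j < n"
    hence "transpose_mat X $$ (i,j) = X $$ (j,i)" using X by simp
    thus "X $$ (j,i) = X $$ (i,j)" using Xs by simp
  qed
  have AXc: "\<And>i j. i < n \<Longrightarrow> j < n \<Longrightarrow> (A * X) $$ (i,j) = (X * A) $$ (i,j)"
  proof -
    fix i j assume ij: "i < n" "j < n"
    have "(A * X - X * A) $$ (i,j) = 0" using comm ij by simp
    thus "(A * X) $$ (i,j) = (X * A) $$ (i,j)" using ij A X by simp
  qed
  have shl: "\<And>i t. sh n i t < n" by (rule sh_lt[OF n0])
  have claim: "\<And>d. 1 \<le> d \<Longrightarrow> 2 * d \<le> n \<Longrightarrow> \<forall>a<n. \<forall>b<n. cd n a b \<le> d \<longrightarrow> X $$ (a,b) = 0"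
  proof -
    fix d :: nat
    show "1 \<le> d \<Longrightarrow> 2 * d \<le> n \<Longrightarrow> \<forall>a<n. \<forall>b<n. cd n a b \<le> d \<longrightarrow> X $$ (a,b) = 0"
    proof (induct d)
      case 0 thus ?case by simp
    next
      case (Suc d)
      show ?case
      proof (cases "d = 0")
        case True
        show ?thesis
        proof (intro allI impI)
          fix a b assume a: "a < n" and b: "b < n" and c: "cd n a b \<le> Suc d"
          show "X $$ (a,b) = 0"
          proof (cases "cd n a b = 0")
            case True thus ?thesis using cd_0[OF True a b] Xd a by simp
          next
            case False
            hence "cd n a b = 1" using c \<open>d = 0\<close> by simp
            hence "A $$ (a,b) \<noteq> 0" by (rule cd1_nz[OF a b])
            moreover have "A $$ (a,b) * X $$ (a,b) = 0" using AX a b by blast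
            ultimately show ?thesis by simp
          qed
        qed
      next
        case False
        hence d1: "1 \<le> d" by simp
        have dn: "2 * Suc d \<le> n" using Suc(3) .
        have H: "\<And>a b. a < n \<Longrightarrow> b < n \<Longrightarrow> cd n a b \<le> d \<Longrightarrow> X $$ (a,b) = 0"
          using Suc(1)[OF d1] dn by auto
        define y where "y i = X $$ (i, sh n i (Suc d))" for i
        define z where "z i = P (Suc d) i * y i" for i
        have rel: "\<And>i. i < n \<Longrightarrow> w i * y i = y (sh n i 1) * w (sh n i (Suc d))"
        proof -
          fix i assume i: "i < n"
          let ?i' = "sh n i 1" and ?j' = "sh n i (Suc d)"
          have i': "?i' < n" and j': "?j' < n" using shl by auto
          have "(A * X) $$ (?i', ?j') = (\<Sum>l<n. A $$ (?i', l) * X $$ (l, ?j'))"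
            by (rule mult_entry[OF A X i' j'])
          also have "\<dots> = (\<Sum>t<n. A $$ (?i', sh n i t) * X $$ (sh n i t, ?j'))" by (rule sum_sh[OF i])
          also have "\<dots> = A $$ (?i', sh n i 0) * X $$ (sh n i 0, ?j')"
          proof (rule sum1, simp add: n0)
            fix t assume t: "t < n" "t \<noteq> 0"
            show "A $$ (?i', sh n i t) * X $$ (sh n i t, ?j') = 0"
            proof (cases "A $$ (?i', sh n i t) = 0")
              case False
              have "cd n ?i' (sh n i t) \<le> 1" using nz_cd[OF i' shl False] .
              hence c1: "(let e = (if 1 \<le> t then t - 1 else 1 - t) in min e (n - e)) \<le> 1"
                using cd_sh2[OF i _ t(1), of 1] n3 by simp
              have "(let e = (if t \<le> Suc d then Suc d - t else t - Suc d) in min e (n - e)) \<le> d"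
                by (rule arith3[OF t dn d1 c1])
              hence "cd n (sh n i t) ?j' \<le> d" using cd_sh2[OF i t(1), of "Suc d"] dn by simp
              hence "X $$ (sh n i t, ?j') = 0" using H shl j' by auto
              thus ?thesis by simp
            qed simp
          qed
          also have "\<dots> = w i * y i" unfolding sh_0[OF i] y_def using A_back[OF i] by simp
          finally have L: "(A * X) $$ (?i', ?j') = w i * y i" .
          have "(X * A) $$ (?i', ?j') = (\<Sum>l<n. X $$ (?i', l) * A $$ (l, ?j'))"
            by (rule mult_entry[OF X A i' j'])
          also have "\<dots> = (\<Sum>t<n. X $$ (?i', sh n i t) * A $$ (sh n i t, ?j'))" by (rule sum_sh[OF i])
          also have "\<dots> = X $$ (?i', sh n i (Suc (Suc d))) * A $$ (sh n i (Suc (Suc d)), ?j')"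
          proof (rule sum1)
            show "Suc (Suc d) < n" using dn d1 by simp
            fix t assume t: "t < n" "t \<noteq> Suc (Suc d)"
            show "X $$ (?i', sh n i t) * A $$ (sh n i t, ?j') = 0"
            proof (cases "A $$ (sh n i t, ?j') = 0")
              case False
              have "cd n (sh n i t) ?j' \<le> 1" using nz_cd[OF shl j' False] .
              hence c1: "(let e = (if t \<le> Suc d then Suc d - t else t - Suc d) in min e (n - e)) \<le> 1"
                using cd_sh2[OF i t(1), of "Suc d"] dn by simp
              have "(let e = (if 1 \<le> t then t - 1 else 1 - t) in min e (n - e)) \<le> d"
                by (rule arith4[OF t dn d1 c1])
              hence "cd n ?i' (sh n i t) \<le> d" using cd_sh2[OF i _ t(1), of 1] n3 by simp
              hence "X $$ (?i', sh n i t) = 0" using H shl i' by auto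
              thus ?thesis by simp
            qed simp
          qed
          also have "\<dots> = y ?i' * w ?j'"
          proof -
            have e1: "sh n i (Suc (Suc d)) = sh n ?i' (Suc d)" unfolding sh_sh by simp
            have e2: "sh n i (Suc (Suc d)) = sh n ?j' 1" unfolding sh_sh by simp
            show ?thesis unfolding y_def using e1 e2 A_back[OF j'] by metis
          qed
          finally have R: "(X * A) $$ (?i', ?j') = y ?i' * w ?j'" .
          show "w i * y i = y ?i' * w ?j'" using L R AXc[OF i' j'] by simp
        qed
        have zsh: "\<And>i. i < n \<Longrightarrow> z (sh n i 1) = z i"
        proof -
          fix i assume i: "i < n"
          have eq: "P (Suc d) i * w (sh n i (Suc d)) = w i * P (Suc d) (sh n i 1)"
            using P_Suc[of "Suc d" i] P_Suc'[OF i, of "Suc d"] by simp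
          have "w i * z (sh n i 1) = w i * P (Suc d) (sh n i 1) * y (sh n i 1)" unfolding z_def by simp
          also have "\<dots> = P (Suc d) i * (y (sh n i 1) * w (sh n i (Suc d)))" using eq by (simp add: mult_ac)
          also have "\<dots> = P (Suc d) i * (w i * y i)" using rel[OF i] by simp
          also have "\<dots> = w i * z i" unfolding z_def by (simp add: mult_ac)
          finally show "z (sh n i 1) = z i" using w_nz[OF i] by simp
        qed
        have zc: "\<And>i. i < n \<Longrightarrow> z i = z 0"
        proof -
          fix i show "i < n \<Longrightarrow> z i = z 0"
          proof (induct i)
            case (Suc i)
            have "sh n i 1 = Suc i" using Suc(2) by (simp add: sh_def)
            thus ?case using zsh[of i] Suc by simp
          qed simp
        qed
        have inner: "\<And>i. i < n \<Longrightarrow> (A ^\<^sub>m Suc d * X) $$ (i,i) = 2 * z 0"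
        proof -
          fix i assume i: "i < n"
          let ?g = "\<lambda>t. (A ^\<^sub>m Suc d) $$ (i, sh n i t) * X $$ (sh n i t, i)"
          have "(A ^\<^sub>m Suc d * X) $$ (i,i) = (\<Sum>l<n. (A ^\<^sub>m Suc d) $$ (i,l) * X $$ (l,i))"
            by (rule mult_entry[OF pow_carrier_mat[OF A] X i i])
          also have "\<dots> = (\<Sum>t<n. ?g t)" by (rule sum_sh[OF i])
          finally have S: "(A ^\<^sub>m Suc d * X) $$ (i,i) = (\<Sum>t<n. ?g t)" .
          have zero: "\<And>t. t < n \<Longrightarrow> t \<noteq> Suc d \<Longrightarrow> t \<noteq> n - Suc d \<Longrightarrow> ?g t = 0"
          proof -
            fix t assume t: "t < n" "t \<noteq> Suc d" "t \<noteq> n - Suc d"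
            show "?g t = 0"
            proof (cases "min t (n - t) \<le> Suc d")
              case False
              hence "Suc d < cd n i (sh n i t)" unfolding cd_sh[OF i t(1)] by (simp only: not_le)
              hence "(A ^\<^sub>m Suc d) $$ (i, sh n i t) = 0" by (rule pow_zero[OF i shl])
              thus ?thesis by (simp del: pow_mat.simps)
            next
              case True
              hence "min t (n - t) \<le> d" using arith5[OF t(1) True] t by blast
              hence "cd n (sh n i t) i \<le> d" unfolding cd_sym[of n "sh n i t" i] cd_sh[OF i t(1)] .
              thus ?thesis using H[OF shl i] by simp
            qed
          qed
          have gd: "?g (Suc d) = z i + (if 2 * Suc d = n then z (sh n i (Suc d)) else 0)"
          proof -
            let ?j = "sh n i (Suc d)"
            have j: "?j < n" by (rule shl)
            have "?g (Suc d) = (P (Suc d) i + (if 2 * Suc d = n then P (Suc d) ?j else 0)) * y i"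
              unfolding pow_path[OF dn i] y_def using Xsym[OF i j] by simp
            moreover have "2 * Suc d = n \<Longrightarrow> y ?j = y i"
            proof -
              assume e: "2 * Suc d = n"
              have e2: "Suc d + Suc d = n" using e by simp
              have "sh n ?j (Suc d) = i" unfolding sh_sh e2 by (rule sh_n[OF i])
              thus "y ?j = y i" unfolding y_def using Xsym[OF i j] by simp
            qed
            ultimately show ?thesis unfolding z_def by (auto simp: algebra_simps)
          qed
          show "(A ^\<^sub>m Suc d * X) $$ (i,i) = 2 * z 0"
          proof (cases "2 * Suc d = n")
            case True
            have ee: "n - Suc d = Suc d" using True by simp
            have "(\<Sum>t<n. ?g t) = ?g (Suc d)"
              by (rule sum1, insert dn, simp, insert zero ee, auto)
            thus ?thesis using S gd True zc[OF i] zc[OF shl] by simp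
          next
            case False
            have "(\<Sum>t<n. ?g t) = ?g (Suc d) + ?g (n - Suc d)"
            proof -
              have h1: "Suc d < n" "n - Suc d < n" "Suc d \<noteq> n - Suc d" using dn False d1 by auto
              show ?thesis by (rule sum2[OF h1 zero])
            qed
            moreover have "?g (n - Suc d) = z (sh n i (n - Suc d))"
            proof -
              let ?m = "sh n i (n - Suc d)"
              have m: "?m < n" by (rule shl)
              have e3: "n - Suc d + Suc d = n" using dn by simp
              have mi: "sh n ?m (Suc d) = i" unfolding sh_sh e3 by (rule sh_n[OF i])
              have "(A ^\<^sub>m Suc d) $$ (i, ?m) = (A ^\<^sub>m Suc d) $$ (?m, i)" by (rule pow_sym_entry[OF A As i m])
              also have "\<dots> = P (Suc d) ?m" using pow_path[OF dn m] mi False by (simp del: pow_mat.simps)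
              finally show ?thesis unfolding z_def y_def mi by simp
            qed
            ultimately show ?thesis using S gd False zc[OF i] zc[OF shl] by simp
          qed
        qed
        have "0 = (\<Sum>i<n. (A ^\<^sub>m Suc d * X) $$ (i,i))" using tr[of "Suc d"] by simp
        also have "\<dots> = (\<Sum>i<n. 2 * z 0)" using inner by (simp del: pow_mat.simps)
        also have "\<dots> = real n * (2 * z 0)" by simp
        finally have z0: "z 0 = 0" using n0 by simp
        have y0: "\<And>i. i < n \<Longrightarrow> y i = 0"
        proof -
          fix i assume i: "i < n"
          have "P (Suc d) i * y i = 0" using zc[OF i] z0 unfolding z_def by simp
          thus "y i = 0" using P_nz[OF i] by simp
        qed
        show ?thesis
        proof (intro allI impI)
          fix a b assume a: "a < n" and b: "b < n" and c: "cd n a b \<le> Suc d"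
          show "X $$ (a,b) = 0"
          proof (cases "cd n a b \<le> d")
            case True thus ?thesis using H a b by simp
          next
            case False
            obtain t where t: "t < n" "b = sh n a t" using l_as_sh[OF a b] by auto
            have ct: "cd n a b = min t (n - t)" using cd_sh[OF a t(1)] t(2) by simp
            have "min t (n - t) \<le> Suc d" using c unfolding ct .
            moreover have "\<not> min t (n - t) \<le> d" using False unfolding ct .
            ultimately
            have "t = Suc d \<or> t = n - Suc d" using arith5[OF t(1)] by blast
            thus ?thesis
            proof
              assume "t = Suc d" thus ?thesis using y0[OF a] t unfolding y_def by simp
            next
              assume tt: "t = n - Suc d"
              have e3: "n - Suc d + Suc d = n" using dn by simp
              have "sh n b (Suc d) = a" unfolding t(2) sh_sh tt e3 by (rule sh_n[OF a])
              hence "X $$ (b,a) = y b" unfolding y_def by simp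
              thus ?thesis using y0[OF b] Xsym[OF a b] by simp
            qed
          qed
        qed
      qed
    qed
  qed
  show ?thesis
  proof (rule eq_matI)
    fix a b assume "a < dim_row (0\<^sub>m n n)" "b < dim_col (0\<^sub>m n n)"
    hence ab: "a < n" "b < n" by auto
    have "1 \<le> n div 2" "2 * (n div 2) \<le> n" using n3 by auto
    thus "X $$ (a,b) = 0\<^sub>m n n $$ (a,b)" using claim[of "n div 2"] cd_le[of n a b] ab by simp
  qed (insert X, auto)
qed

end



theorem theorem4p2:
  fixes n :: nat and A :: "real mat"
  assumes "n \<ge> 3" and "A \<in> S_graph n (cycle_edge n)"
  shows "\<exists>B \<in> S_graph n (cycle_edge n). mult_list B = mult_list A \<and> SMP B"
proof -
  interpret cyc n A by (unfold_locales, rule assms(1), rule assms(2))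
  have dr: "dim_row A = n" using A by auto
  have "SMP A" unfolding SMP_def Let_def dr
  proof (intro ballI impI)
    fix X :: "real mat" assume X: "X \<in> carrier_mat n n"
    assume c: "transpose_mat X = X \<and>
       (\<forall>i<n. \<forall>j<n. A $$ (i,j) * X $$ (i,j) = 0) \<and>
       (\<forall>i<n. X $$ (i,i) = 0) \<and>
       A * X - X * A = 0\<^sub>m n n \<and>
       (\<forall>k<length (distinct_eigenvalues A). (\<Sum>i<n. (A ^\<^sub>m k * X) $$ (i,i)) = 0)"
    have tr: "\<And>k. (\<Sum>i<n. (A ^\<^sub>m k * X) $$ (i,i)) = 0"
      by (rule trace_all[OF A As X], insert c, auto)
    show "X = 0\<^sub>m n n" by (rule main_comb[OF X _ _ _ _ tr], insert c, auto)
  qed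
  thus ?thesis using assms(2) by blast
qed


end
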